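(* Let $f(q)=\sum_{n\ge0}a(n)q^n$ with real coefficients satisfy $a(n)>0$ for all $n>n_0$, for some $n_0\in\mathbb{N}_0$. Let $\lambda\in\{0,1\}$, $m\in\mathbb{N}$, and set $\delta_0=1$, $\delta_1=2$. Then for every $n\ge0$ the coefficient of $q^n$ in $q^{-m\lambda^2/4}f(q)\theta_\lambda(m\tau)$ is at least $\delta_\lambda a(n)-2\sum_{0\le j\le n_0}|a(j)|$. Moreover, if for some $n_1\in\mathbb{N}$ one has $\delta_\lambda a(n)>2\sum_{0\le j\le n_0}|a(j)|$ for all $n\ge n_1$, then the coefficient of $q^{\nu}$ in $f(q)\theta_\lambda(m\tau)$ is positive for every exponent $\nu\ge n_1+\frac{m\lambda^2}{4}$.
   Context: $q=e^{2\pi i\tau}$. For $\lambda\in\{0,1\}$, $\theta_\lambda(\tau)=\sum_{n\in\mathbb{Z}}q^{(n+\lambda/2)^2}$, so $\theta_\lambda(m\tau)=\sum_{n\in\mathbb{Z}}q^{m(n+\lambda/2)^2}$; thus $q^{-m\lambda^2/4}\theta_\lambda(m\tau)$ is a power series in integral powers of $q$, and the exponents occurring in $f(q)\theta_\lambda(m\tau)$ lie in $\mathbb{Z}+\frac{m\lambda^2}{4}$. *)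

theory Defs
  imports Complex_Main
begin

text \<open>Coefficient of \<open>q^\<nu>\<close> (real exponent \<nu>) in the formal product
  \<open>f(q) \<theta>_\<lambda>(m\<tau>) = (\<Sum>j\<ge>0. a j q^j) (\<Sum>n\<in>\<int>. q^(m (n+\<lambda>/2)^2))\<close>:
  the sum over all pairs (j,n) with \<open>j + m (n+\<lambda>/2)^2 = \<nu>\<close> of \<open>a j\<close>.\<close>

definition theta_pairs :: "nat \<Rightarrow> nat \<Rightarrow> real \<Rightarrow> nat \<Rightarrow> int set" where
  "theta_pairs lam m \<nu> j = {n::int. real j + real m * (real_of_int n + real lam / 2)^2 = \<nu>}"

definition ftheta_coeff :: "(nat \<Rightarrow> real) \<Rightarrow> nat \<Rightarrow> nat \<Rightarrow> real \<Rightarrow> real" where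
  "ftheta_coeff a lam m \<nu> =
     (\<Sum>j\<in>{j::nat. theta_pairs lam m \<nu> j \<noteq> {}}. a j * real (card (theta_pairs lam m \<nu> j)))"

definition delta :: "nat \<Rightarrow> real" where
  "delta lam = (if lam = 0 then 1 else 2)"

end

theory Submission
  imports Defs
begin

lemma card_sq_le2:
  fixes c l :: real
  shows "card {k::int. (real_of_int k + l)^2 = c} \<le> 2"
proof -
  have "{k::int. (real_of_int k + l)^2 = c} \<subseteq> {\<lfloor>sqrt c - l\<rfloor>, \<lfloor>- sqrt c - l\<rfloor>}"
  proof
    fix k assume "k \<in> {k::int. (real_of_int k + l)^2 = c}"
    hence h: "(real_of_int k + l)^2 = c" by simp
    hence "real_of_int k + l = sqrt c \<or> real_of_int k + l = - sqrt c"
      by (metis real_sqrt_abs abs_real_def add.inverse_inverse)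
    hence "real_of_int k = sqrt c - l \<or> real_of_int k = - sqrt c - l" by linarith
    thus "k \<in> {\<lfloor>sqrt c - l\<rfloor>, \<lfloor>- sqrt c - l\<rfloor>}"
      by (metis floor_of_int insertCI singletonI)
  qed
  hence "card {k::int. (real_of_int k + l)^2 = c} \<le> card {\<lfloor>sqrt c - l\<rfloor>, \<lfloor>- sqrt c - l\<rfloor>}"
    by (intro card_mono) auto
  also have "\<dots> \<le> 2" by (simp add: card_insert_if)
  finally show ?thesis .
qed

lemma tp_eq:
  assumes "m \<ge> 1"
  shows "theta_pairs lam m \<nu> j = {k::int. (real_of_int k + real lam / 2)^2 = (\<nu> - real j) / real m}"
  using assms unfolding theta_pairs_def by (auto simp: field_simps)

lemma card_tp_le2:
  assumes "m \<ge> 1"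
  shows "card (theta_pairs lam m \<nu> j) \<le> 2"
  unfolding tp_eq[OF assms] by (rule card_sq_le2)

lemma tp_nonempty_le:
  assumes "theta_pairs lam m \<nu> j \<noteq> {}"
  shows "real j \<le> \<nu>"
proof -
  from assms obtain k where "real j + real m * (real_of_int k + real lam / 2)^2 = \<nu>"
    unfolding theta_pairs_def by auto
  moreover have "real m * (real_of_int k + real lam / 2)^2 \<ge> 0" by simp
  ultimately show ?thesis by linarith
qed

lemma card_tp_self:
  assumes "m \<ge> 1" and lam: "lam \<in> {0,1}"
  shows "real (card (theta_pairs lam m (real n + real m * real lam ^ 2 / 4) n)) = delta lam"
proof -
  have e: "theta_pairs lam m (real n + real m * real lam ^ 2 / 4) n
        = {k::int. (real_of_int k + real lam / 2)^2 = real lam ^ 2 / 4}"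
    using assms(1) unfolding tp_eq[OF assms(1)] by (auto simp: field_simps)
  show ?thesis
  proof (cases "lam = 0")
    case True
    have "{k::int. (real_of_int k + real lam / 2)^2 = real lam ^ 2 / 4} = {0}"
      using True by auto
    thus ?thesis using True e by (simp add: delta_def)
  next
    case False
    hence l1: "lam = 1" using lam by auto
    have "{k::int. (real_of_int k + real lam / 2)^2 = real lam ^ 2 / 4} = {0, -1}"
    proof (rule set_eqI)
      fix k :: int
      have d: "(real_of_int k + 1 / 2)^2 - 1 / 4 = real_of_int k * (real_of_int k + 1)"
        by (simp add: power2_eq_square algebra_simps)
      have "(real_of_int k + 1 / 2)^2 = 1 / 4 \<longleftrightarrow> real_of_int k * (real_of_int k + 1) = 0"
        using d by linarith
      also have "\<dots> \<longleftrightarrow> k = 0 \<or> k = -1" by (auto simp: add_eq_0_iff)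
      finally show "k \<in> {k::int. (real_of_int k + real lam / 2)^2 = real lam ^ 2 / 4} \<longleftrightarrow> k \<in> {0, -1}"
        using l1 by auto
    qed
    thus ?thesis using l1 e by (simp add: delta_def)
  qed
qed

lemma lower_bound:
  fixes a :: "nat \<Rightarrow> real" and n0 m lam :: nat
  assumes pos: "\<And>n. n > n0 \<Longrightarrow> a n > 0"
    and lam: "lam \<in> {0, 1}"
    and m: "m \<ge> 1"
  shows "ftheta_coeff a lam m (real n + real m * real lam ^ 2 / 4)
                     \<ge> delta lam * a n - 2 * (\<Sum>j\<le>n0. \<bar>a j\<bar>)"
proof -
  define \<nu> where "\<nu> = real n + real m * real lam ^ 2 / 4"
  define c where "c j = card (theta_pairs lam m \<nu> j)" for j
  define J where "J = {j::nat. theta_pairs lam m \<nu> j \<noteq> {}}"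
  define N where "N = max n0 (nat \<lceil>\<nu>\<rceil>)"
  have \<nu>0: "\<nu> \<ge> real n" unfolding \<nu>_def by simp
  have JF: "J \<subseteq> {..N}"
  proof
    fix j assume "j \<in> J"
    hence "real j \<le> \<nu>" unfolding J_def using tp_nonempty_le by blast
    hence "j \<le> nat \<lceil>\<nu>\<rceil>" by linarith
    thus "j \<in> {..N}" unfolding N_def by auto
  qed
  have "n \<le> nat \<lceil>\<nu>\<rceil>" using \<nu>0 by linarith
  hence nN: "n \<in> {..N}" unfolding N_def by simp
  have "ftheta_coeff a lam m \<nu> = (\<Sum>j\<in>J. a j * real (c j))"
    unfolding ftheta_coeff_def J_def c_def by simp
  also have "\<dots> = (\<Sum>j\<in>{..N}. a j * real (c j))"
  proof (rule sum.mono_neutral_left[OF _ JF])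
    show "\<forall>i\<in>{..N} - J. a i * real (c i) = 0" unfolding J_def c_def by auto
  qed simp
  finally have eq: "ftheta_coeff a lam m \<nu> = (\<Sum>j\<in>{..N}. a j * real (c j))" .
  have pw: "a j * real (c j) \<ge> (if j = n then delta lam * a n else 0)
              - 2 * (if j \<le> n0 then \<bar>a j\<bar> else 0)" for j
  proof (cases "j = n")
    case True
    have "real (c n) = delta lam" unfolding c_def \<nu>_def by (rule card_tp_self[OF m lam])
    thus ?thesis using True by (simp add: mult.commute)
  next
    case False
    have "c j \<le> 2" unfolding c_def by (rule card_tp_le2[OF m])
    hence c2: "real (c j) \<le> 2" by simp
    have c0: "real (c j) \<ge> 0" by simp
    show ?thesis
    proof (cases "j \<le> n0")
      case True
      have "a j * real (c j) \<ge> - \<bar>a j\<bar> * real (c j)"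
        by (rule mult_right_mono[OF _ c0]) simp
      moreover have "\<bar>a j\<bar> * real (c j) \<le> \<bar>a j\<bar> * 2" using c2 by (simp add: mult_left_mono)
      ultimately have "a j * real (c j) \<ge> - 2 * \<bar>a j\<bar>" by linarith
      thus ?thesis using False True by simp
    next
      case f2: False
      have "a j > 0" using pos f2 by simp
      thus ?thesis using False f2 c0 by simp
    qed
  qed
  have "(\<Sum>j\<in>{..N}. (if j = n then delta lam * a n else 0) - 2 * (if j \<le> n0 then \<bar>a j\<bar> else 0))
        \<le> (\<Sum>j\<in>{..N}. a j * real (c j))"
    by (rule sum_mono) (rule pw)
  moreover have "(\<Sum>j\<in>{..N}. (if j = n then delta lam * a n else 0) - 2 * (if j \<le> n0 then \<bar>a j\<bar> else 0))
        = delta lam * a n - 2 * (\<Sum>j\<le>n0. \<bar>a j\<bar>)"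
  proof -
    have s1: "(\<Sum>j\<in>{..N}. (if j = n then delta lam * a n else 0)) = delta lam * a n"
      using nN by simp
    have "(\<Sum>j\<in>{..N}. (if j \<le> n0 then \<bar>a j\<bar> else 0)) = (\<Sum>j\<in>{..N} \<inter> {j. j \<le> n0}. \<bar>a j\<bar>)"
      by (simp add: sum.inter_restrict)
    also have "{..N} \<inter> {j. j \<le> n0} = {..n0}" unfolding N_def by auto
    finally have s2: "(\<Sum>j\<in>{..N}. (if j \<le> n0 then \<bar>a j\<bar> else 0)) = (\<Sum>j\<le>n0. \<bar>a j\<bar>)" .
    have "(\<Sum>j\<in>{..N}. (if j = n then delta lam * a n else 0) - 2 * (if j \<le> n0 then \<bar>a j\<bar> else 0))
       = (\<Sum>j\<in>{..N}. (if j = n then delta lam * a n else 0)) - (\<Sum>j\<in>{..N}. 2 * (if j \<le> n0 then \<bar>a j\<bar> else 0))"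
      by (rule sum_subtractf)
    also have "(\<Sum>j\<in>{..N}. 2 * (if j \<le> n0 then \<bar>a j\<bar> else 0)) = 2 * (\<Sum>j\<in>{..N}. (if j \<le> n0 then \<bar>a j\<bar> else 0))"
      by (rule sum_distrib_left[symmetric])
    finally show ?thesis using s1 s2 by simp
  qed
  ultimately show ?thesis using eq unfolding \<nu>_def by simp
qed

theorem lemma6p1:
  fixes a :: "nat \<Rightarrow> real" and n0 m lam :: nat
  assumes pos: "\<And>n. n > n0 \<Longrightarrow> a n > 0"
    and lam: "lam \<in> {0, 1}"
    and m: "m \<ge> 1"
  shows "(\<forall>n::nat. ftheta_coeff a lam m (real n + real m * real lam ^ 2 / 4)
                     \<ge> delta lam * a n - 2 * (\<Sum>j\<le>n0. \<bar>a j\<bar>))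
       \<and> (\<forall>n1::nat. n1 \<ge> 1 \<longrightarrow>
             (\<forall>n\<ge>n1. delta lam * a n > 2 * (\<Sum>j\<le>n0. \<bar>a j\<bar>)) \<longrightarrow>
             (\<forall>\<nu>::real. \<nu> - real m * real lam ^ 2 / 4 \<in> \<int> \<longrightarrow>
                 \<nu> \<ge> real n1 + real m * real lam ^ 2 / 4 \<longrightarrow>
                 ftheta_coeff a lam m \<nu> > 0))"
proof (intro conjI allI impI)
  fix n show "ftheta_coeff a lam m (real n + real m * real lam ^ 2 / 4)
                     \<ge> delta lam * a n - 2 * (\<Sum>j\<le>n0. \<bar>a j\<bar>)"
    by (rule lower_bound[OF pos lam m])
next
  fix n1 :: nat and \<nu> :: real
  assume h: "\<forall>n\<ge>n1. delta lam * a n > 2 * (\<Sum>j\<le>n0. \<bar>a j\<bar>)"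
    and z: "\<nu> - real m * real lam ^ 2 / 4 \<in> \<int>"
    and ge: "\<nu> \<ge> real n1 + real m * real lam ^ 2 / 4"
  from z obtain k :: int where k: "\<nu> - real m * real lam ^ 2 / 4 = of_int k"
    by (auto elim: Ints_cases)
  have "of_int k \<ge> real n1" using k ge by linarith
  hence kn: "nat k \<ge> n1" "real (nat k) = of_int k" by linarith+
  have \<nu>e: "\<nu> = real (nat k) + real m * real lam ^ 2 / 4" using k kn by linarith
  have "ftheta_coeff a lam m \<nu> \<ge> delta lam * a (nat k) - 2 * (\<Sum>j\<le>n0. \<bar>a j\<bar>)"
    unfolding \<nu>e by (rule lower_bound[OF pos lam m])
  moreover have "delta lam * a (nat k) > 2 * (\<Sum>j\<le>n0. \<bar>a j\<bar>)" using h kn by auto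
  ultimately show "ftheta_coeff a lam m \<nu> > 0" by linarith
qed

end
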